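(* Let $n\ge 2$ be an integer. For each sufficiently large real number $N$ there is a measurable set $S=S_N\subset[0,1]^n$ with $|S|\ge\frac34$ such that for each $(y_1,\ldots,y_n)\in S$ there exists an integer $p\in[4^{-n-1}N,N+2]$ satisfying $$\max_{1\le i\le n}\|py_i\|\le\frac1{N^{1/n}}.$$
   Context: $\|x\|$ denotes the distance from the real number $x$ to the nearest integer; $|S|$ denotes Lebesgue measure. *)

theory Defs
  imports "HOL-Analysis.Analysis"
begin

definition dist_int :: "real \<Rightarrow> real" where
  "dist_int x = (INF k::int. \<bar>x - of_int k\<bar>)"

end

theory Submission
  imports Defs
begin


lemma dist_int_round: "dist_int x = \<bar>x - of_int (round x)\<bar>"
  unfolding dist_int_def
proof (rule antisym)
  show "(INF k::int. \<bar>x - of_int k\<bar>) \<le> \<bar>x - of_int (round x)\<bar>"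
    by (rule cINF_lower) (auto intro: bdd_belowI[where m=0])
  show "\<bar>x - of_int (round x)\<bar> \<le> (INF k::int. \<bar>x - of_int k\<bar>)"
  proof (rule cINF_greatest)
    fix k :: int
    show "\<bar>x - of_int (round x)\<bar> \<le> \<bar>x - of_int k\<bar>"
    proof (rule ccontr)
      assume h: "\<not> ?thesis"
      have r: "\<bar>of_int (round x) - x\<bar> \<le> 1/2" by (rule of_int_round_abs_le)
      have "k \<noteq> round x" using h by auto
      hence "\<bar>k - round x\<bar> \<ge> 1" by linarith
      hence "\<bar>real_of_int k - of_int (round x)\<bar> \<ge> 1"
        by (metis of_int_1_le_iff of_int_abs of_int_diff)
      thus False using h r by linarith
    qed
  qed simp
qed

lemma dist_int_le: "\<bar>x - of_int k\<bar> \<le> d \<Longrightarrow> dist_int x \<le> d"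
  unfolding dist_int_def
  by (rule order_trans[OF cINF_lower]) (auto intro: bdd_belowI[where m=0])

lemma dist_int_leD: "dist_int x \<le> d \<Longrightarrow> \<exists>k::int. \<bar>x - of_int k\<bar> \<le> d"
  by (auto simp: dist_int_round)


lemma arc_count:
  fixes c \<delta> :: real and L :: nat
  assumes "0 < \<delta>" "\<delta> \<le> 1" "L > 0"
  shows "nat \<lfloor>\<delta> * L\<rfloor> \<le> card {j\<in>{0..<L}. \<exists>m::int. c + m \<le> real j / L \<and> real j / L < c + m + \<delta>}"
proof -
  define a where "a = \<lceil>L * c\<rceil>"
  define T where "T = nat \<lfloor>\<delta> * L\<rfloor>"
  define f where "f t = nat ((a + int t) mod int L)" for t
  have "\<delta> * L \<le> real L" using assms by (simp add: mult_left_le_one_le)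
  hence TL: "T \<le> L" unfolding T_def by linarith
  have inj: "inj_on f {0..<T}"
  proof (rule inj_onI)
    fix t1 t2 assume t: "t1 \<in> {0..<T}" "t2 \<in> {0..<T}" "f t1 = f t2"
    hence "(a + int t1) mod int L = (a + int t2) mod int L" unfolding f_def using assms(3)
      by (metis eq_nat_nat_iff of_nat_0_less_iff pos_mod_sign)
    hence "int L dvd ((a + int t1) - (a + int t2))"
      by (simp only: mod_eq_dvd_iff)
    hence "int L dvd (int t1 - int t2)" by simp
    moreover have "\<bar>int t1 - int t2\<bar> < int L" using t TL by auto
    ultimately show "t1 = t2"
    proof (cases "t1 = t2")
      case False
      hence "int t1 - int t2 \<noteq> 0" by simp
      note dvd_imp_le_int[OF this \<open>int L dvd (int t1 - int t2)\<close>]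
      thus ?thesis using \<open>\<bar>int t1 - int t2\<bar> < int L\<close> by simp
    qed
  qed
  have sub: "f ` {0..<T} \<subseteq> {j\<in>{0..<L}. \<exists>m::int. c + m \<le> real j / L \<and> real j / L < c + m + \<delta>}"
  proof
    fix j assume "j \<in> f ` {0..<T}"
    then obtain t where t: "t < T" "j = f t" by auto
    define z where "z = a + int t"
    have zm: "0 \<le> z mod int L" "z mod int L < int L" using assms(3) by auto
    have jr: "real j = of_int (z mod int L)" using t zm unfolding f_def z_def by simp
    have jL: "j < L" using zm t unfolding f_def z_def by auto
    have eq: "real j / L = of_int z / L - of_int (z div int L)"
    proof -
      have "of_int z = of_int (z mod int L) + real L * of_int (z div int L)"
        by (metis mod_mult_div_eq of_int_add of_int_mult of_int_of_nat_eq)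
      thus ?thesis using jr assms(3) by (simp add: field_simps)
    qed
    have a1: "L * c \<le> of_int a" "of_int a < L * c + 1" unfolding a_def by linarith+
    have tT: "real t + 1 \<le> \<delta> * L" using t unfolding T_def by linarith
    have "c \<le> of_int z / L" using a1 assms(3) unfolding z_def by (simp add: field_simps)
    moreover have "of_int z / L < c + \<delta>" using a1 tT assms(3) unfolding z_def by (simp add: field_simps)
    ultimately have "c + of_int (- (z div int L)) \<le> real j / L \<and> real j / L < c + of_int (- (z div int L)) + \<delta>"
      using eq by simp
    thus "j \<in> {j\<in>{0..<L}. \<exists>m::int. c + m \<le> real j / L \<and> real j / L < c + m + \<delta>}"
      using jL by (intro CollectI conjI exI[of _ "- (z div int L)"]) auto
  qed
  have "T = card (f ` {0..<T})" using card_image[OF inj] by simp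
  also have "\<dots> \<le> card {j\<in>{0..<L}. \<exists>m::int. c + m \<le> real j / L \<and> real j / L < c + m + \<delta>}"
    by (rule card_mono[OF _ sub]) simp
  finally show ?thesis unfolding T_def .
qed


lemma dirichlet:
  fixes y :: "real^'n" and K :: nat
  assumes d: "0 < \<delta>" "\<delta> \<le> 1" and big: "(real K + 1) * \<delta> ^ CARD('n) > 1"
  shows "\<exists>p::int. 1 \<le> p \<and> p \<le> int K \<and> (\<forall>i. dist_int (of_int p * y$i) \<le> \<delta>)"
proof -
  let ?n = "CARD('n)"
  have lim: "(\<lambda>L. (real K + 1) * (\<delta> - 1 / real L) ^ ?n) \<longlonglongrightarrow> (real K + 1) * (\<delta> - 0) ^ ?n"
    by (intro tendsto_intros lim_const_over_n)
  have ev1: "eventually (\<lambda>L. (real K + 1) * (\<delta> - 1 / real L) ^ ?n > 1) sequentially"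
    using order_tendstoD(1)[OF lim] big by simp
  have ev2: "eventually (\<lambda>L. 1 / real L < \<delta>) sequentially"
    using order_tendstoD(2)[OF lim_const_over_n[of 1], of \<delta>] d by simp
  obtain L0 where L0: "\<And>L. L \<ge> L0 \<Longrightarrow> (real K + 1) * (\<delta> - 1 / real L) ^ ?n > 1 \<and> 1 / real L < \<delta>"
    using eventually_conj[OF ev1 ev2] unfolding eventually_sequentially by blast
  define L where "L = Suc L0"
  have Lp: "L > 0" and Lb: "(real K + 1) * (\<delta> - 1 / real L) ^ ?n > 1" and Ld: "1 / real L < \<delta>"
    using L0[of L] unfolding L_def by auto
  define A where "A k i = {j\<in>{0..<L}. \<exists>m::int. real k * y$i + m \<le> real j / L \<and> real j / L < real k * y$i + m + \<delta>}"
    for k :: nat and i :: 'n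
  define G where "G k = PiE UNIV (A k)" for k
  define T where "T = nat \<lfloor>\<delta> * L\<rfloor>"
  have TA: "T \<le> card (A k i)" for k i
    unfolding T_def A_def by (rule arc_count[OF d Lp])
  have finA: "finite (A k i)" for k i unfolding A_def by simp
  have cardG: "T ^ ?n \<le> card (G k)" for k
  proof -
    have "card (G k) = (\<Prod>i\<in>UNIV. card (A k i))" unfolding G_def by (simp add: card_PiE)
    moreover have "(\<Prod>i\<in>(UNIV::'n set). T) \<le> (\<Prod>i\<in>UNIV. card (A k i))"
      by (rule prod_mono) (use TA in auto)
    ultimately show ?thesis by simp
  qed
  have e: "L * (\<delta> - 1 / L) = \<delta> * L - 1" using Lp by (simp add: field_simps)
  have dL: "\<delta> * L > 1" using Ld Lp by (simp add: field_simps)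
  have Treal: "real T \<ge> L * (\<delta> - 1 / L)" "L * (\<delta> - 1 / L) \<ge> 0"
    unfolding e T_def using dL by linarith+
  have sumG: "real (\<Sum>k\<in>{0..K}. card (G k)) > real L ^ ?n"
  proof -
    have "real L ^ ?n < real L ^ ?n * ((real K + 1) * (\<delta> - 1 / real L) ^ ?n)"
      using Lb Lp by simp
    also have "\<dots> = (real K + 1) * (L * (\<delta> - 1 / L)) ^ ?n" by (simp add: power_mult_distrib)
    also have "\<dots> \<le> (real K + 1) * real T ^ ?n"
      using Treal by (intro mult_left_mono power_mono) auto
    also have "\<dots> = real (\<Sum>k\<in>{0..K}. T ^ ?n)" by (simp add: algebra_simps)
    also have "\<dots> \<le> real (\<Sum>k\<in>{0..K}. card (G k))"
      by (intro of_nat_mono sum_mono cardG)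
    finally show ?thesis .
  qed
  have "\<exists>k1 k2. k1 < k2 \<and> k2 \<le> K \<and> G k1 \<inter> G k2 \<noteq> {}"
  proof (rule ccontr)
    assume "\<not> ?thesis"
    hence disj: "\<forall>i\<in>{0..K}. \<forall>j\<in>{0..K}. i \<noteq> j \<longrightarrow> G i \<inter> G j = {}"
      by (metis Int_commute atLeastAtMost_iff linorder_neqE_nat)
    have finG: "\<forall>k\<in>{0..K}. finite (G k)" unfolding G_def using finA by (simp add: finite_PiE)
    have "card (\<Union>k\<in>{0..K}. G k) = (\<Sum>k\<in>{0..K}. card (G k))"
      by (rule card_UN_disjoint[OF _ finG disj]) simp
    moreover have "card (\<Union>k\<in>{0..K}. G k) \<le> card (PiE (UNIV::'n set) (\<lambda>_. {0..<L}))"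
      by (rule card_mono) (auto simp: G_def A_def PiE_iff intro!: finite_PiE)
    moreover have "card (PiE (UNIV::'n set) (\<lambda>_. {0..<L})) = L ^ ?n" by (simp add: card_PiE)
    ultimately have "real (\<Sum>k\<in>{0..K}. card (G k)) \<le> real L ^ ?n"
      by (metis of_nat_le_iff of_nat_power)
    thus False using sumG by simp
  qed
  then obtain k1 k2 f where k: "k1 < k2" "k2 \<le> K" "f \<in> G k1" "f \<in> G k2" by blast
  show ?thesis
  proof (intro exI conjI allI)
    show "1 \<le> int k2 - int k1" "int k2 - int k1 \<le> int K" using k by auto
    fix i
    have "f i \<in> A k1 i" "f i \<in> A k2 i" using k unfolding G_def by auto
    then obtain m1 m2 :: int where
      m1: "real k1 * y$i + m1 \<le> real (f i) / L" "real (f i) / L < real k1 * y$i + m1 + \<delta>" and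
      m2: "real k2 * y$i + m2 \<le> real (f i) / L" "real (f i) / L < real k2 * y$i + m2 + \<delta>"
      unfolding A_def by blast
    have "of_int (int k2 - int k1) * y$i = real k2 * y$i - real k1 * y$i" by (simp add: algebra_simps)
    hence "\<bar>of_int (int k2 - int k1) * y$i - of_int (m1 - m2)\<bar> \<le> \<delta>" using m1 m2 by simp
    thus "dist_int (of_int (int k2 - int k1) * y$i) \<le> \<delta>" by (rule dist_int_le)
  qed
qed


definition boxes :: "int \<Rightarrow> real \<Rightarrow> (real^'n) set" where
  "boxes p \<delta> = (\<Union>j\<in>PiE UNIV (\<lambda>_::'n. {0..nat p}).
      cbox (\<chi> i. (real (j i) - \<delta>) / of_int p) (\<chi> i. (real (j i) + \<delta>) / of_int p))"

lemma cover:
  fixes p :: int and \<delta> :: real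
  assumes p: "1 \<le> p" and d: "0 < \<delta>" "\<delta> < 1"
    and y: "y \<in> cbox 0 (1::real^'n)" and dy: "\<forall>i. dist_int (of_int p * y$i) \<le> \<delta>"
  shows "y \<in> boxes p \<delta>"
proof -
  have "\<forall>i. \<exists>k::int. \<bar>of_int p * y$i - of_int k\<bar> \<le> \<delta>" using dy dist_int_leD by blast
  then obtain k where k: "\<And>i. \<bar>of_int p * y$i - of_int (k i)\<bar> \<le> \<delta>" by metis
  have y01: "0 \<le> y$i" "y$i \<le> 1" for i using y by (auto simp: mem_box_cart)
  have pr: "real_of_int p \<ge> 1" using p by simp
  have k0: "0 \<le> k i" for i
  proof -
    have "of_int p * y$i \<ge> 0" using y01 pr by simp
    hence "real_of_int (k i) > -1" using k[of i] d by linarith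
    thus ?thesis by simp
  qed
  have kp: "k i \<le> p" for i
  proof -
    have "of_int p * y$i \<le> of_int p" using y01 pr by (simp add: mult_left_le)
    hence "real_of_int (k i) < of_int p + 1" using k[of i] d by linarith
    thus ?thesis by simp
  qed
  define j where "j i = nat (k i)" for i
  have jJ: "j \<in> PiE UNIV (\<lambda>_::'n. {0..nat p})" using kp unfolding j_def by (auto simp: PiE_iff nat_mono)
  have jr: "real (j i) = of_int (k i)" for i using k0 unfolding j_def by simp
  have "y \<in> cbox (\<chi> i. (real (j i) - \<delta>) / of_int p) (\<chi> i. (real (j i) + \<delta>) / of_int p)"
  proof (unfold mem_box_cart, intro allI conjI)
    fix i
    show "(\<chi> i. (real (j i) - \<delta>) / of_int p) $ i \<le> y $ i"
      using k[of i] pr by (simp add: jr field_simps)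
    show "y $ i \<le> (\<chi> i. (real (j i) + \<delta>) / of_int p) $ i"
      using k[of i] pr by (simp add: jr field_simps)
  qed
  thus ?thesis unfolding boxes_def using jJ by blast
qed

lemma boxes_sets: "boxes p \<delta> \<in> sets lebesgue"
  unfolding boxes_def by (intro sets.finite_UN finite_PiE) auto

lemma boxes_fmeasurable: "boxes p \<delta> \<in> fmeasurable lebesgue"
  unfolding boxes_def by (intro fmeasurable.finite_UN finite_PiE) auto

lemma boxes_measure:
  fixes p :: int and \<delta> :: real
  assumes p: "1 \<le> p" and d: "0 < \<delta>"
  shows "measure lebesgue (boxes p \<delta> :: (real^'n) set) \<le> (4 * \<delta>) ^ CARD('n)"
proof -
  let ?J = "PiE UNIV (\<lambda>_::'n. {0..nat p})"
  have pr: "real_of_int p \<ge> 1" using p by simp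
  have mb: "measure lebesgue (cbox (\<chi> i. (real (j i) - \<delta>) / of_int p) (\<chi> i. (real (j i) + \<delta>) / of_int p) :: (real^'n) set)
       = (2 * \<delta> / of_int p) ^ CARD('n)" for j :: "'n \<Rightarrow> nat"
  proof -
    have ne: "cbox (\<chi> i. (real (j i) - \<delta>) / of_int p) (\<chi> i. (real (j i) + \<delta>) / of_int p) \<noteq> ({} :: (real^'n) set)"
    proof -
      have "(\<chi> i. (real (j i) - \<delta>) / of_int p) \<in> cbox (\<chi> i. (real (j i) - \<delta>) / of_int p) (\<chi> i. (real (j i) + \<delta>) / of_int p :: real^'n)"
        using d pr by (auto simp: mem_box_cart divide_right_mono)
      thus ?thesis by blast
    qed
    have "measure lebesgue (cbox (\<chi> i. (real (j i) - \<delta>) / of_int p) (\<chi> i. (real (j i) + \<delta>) / of_int p) :: (real^'n) set)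
       = measure lborel (cbox (\<chi> i. (real (j i) - \<delta>) / of_int p) (\<chi> i. (real (j i) + \<delta>) / of_int p) :: (real^'n) set)"
      by simp
    also have "\<dots> = (\<Prod>i\<in>UNIV. (real (j i) + \<delta>) / of_int p - (real (j i) - \<delta>) / of_int p)"
      by (subst content_cbox_cart[OF ne]) simp
    also have "\<dots> = (\<Prod>i\<in>(UNIV::'n set). 2 * \<delta> / of_int p)"
      by (rule prod.cong) (auto simp: diff_divide_distrib[symmetric])
    finally show ?thesis by simp
  qed
  have "measure lebesgue (boxes p \<delta> :: (real^'n) set) \<le> (\<Sum>j\<in>?J. measure lebesgue (cbox (\<chi> i. (real (j i) - \<delta>) / of_int p) (\<chi> i. (real (j i) + \<delta>) / of_int p) :: (real^'n) set))"
    unfolding boxes_def by (rule measure_UNION_le) (auto intro: finite_PiE)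
  also have "\<dots> = real (card ?J) * (2 * \<delta> / of_int p) ^ CARD('n)" by (simp add: mb)
  also have "real (card ?J) = (real_of_int p + 1) ^ CARD('n)"
    using p by (simp add: card_PiE add.commute)
  also have "(real_of_int p + 1) ^ CARD('n) * (2 * \<delta> / of_int p) ^ CARD('n) = ((real_of_int p + 1) * (2 * \<delta> / of_int p)) ^ CARD('n)"
    by (rule power_mult_distrib[symmetric])
  also have "\<dots> \<le> (4 * \<delta>) ^ CARD('n)"
  proof (rule power_mono)
    have "(real_of_int p + 1) * (2 * \<delta> / of_int p) = 2 * \<delta> + 2 * \<delta> / of_int p"
      using pr by (simp add: field_simps)
    also have "2 * \<delta> / of_int p \<le> 2 * \<delta>" using pr d by (simp add: divide_le_eq)
    finally show "(real_of_int p + 1) * (2 * \<delta> / of_int p) \<le> 4 * \<delta>" by simp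
  qed (use d pr in simp)
  finally show ?thesis .
qed


theorem lemma3p1:
  assumes "CARD('n::finite) \<ge> 2"
  shows "\<exists>N0::real. \<forall>N\<ge>N0. \<exists>S::(real^'n) set.
           S \<subseteq> cbox 0 1 \<and> S \<in> sets lebesgue \<and> measure lebesgue S \<ge> 3/4 \<and>
           (\<forall>y\<in>S. \<exists>p::int. 4 powr (- real (CARD('n) + 1)) * N \<le> real_of_int p \<and>
                real_of_int p \<le> N + 2 \<and>
                (\<forall>i. dist_int (real_of_int p * y $ i) \<le> 1 / N powr (1 / real CARD('n))))"
proof (rule exI[of _ 2], intro allI impI)
  fix N :: real assume N2: "N \<ge> 2"
  define n where "n = CARD('n)"
  have n0: "n > 0" unfolding n_def by simp
  define \<delta> where "\<delta> = 1 / N powr (1 / real n)"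
  define c where "c = 4 powr (- real (n + 1))"
  have Np: "N powr (1 / real n) > 1" using N2 n0 by simp
  have d0: "0 < \<delta>" and d1: "\<delta> < 1" unfolding \<delta>_def using Np by (auto simp: divide_less_eq)
  have dn: "\<delta> ^ n = 1 / N"
  proof -
    have "(N powr (1 / real n)) ^ n = N powr (real n * (1 / real n))"
      using N2 by (simp add: powr_power)
    also have "\<dots> = N" using n0 N2 by simp
    finally show ?thesis unfolding \<delta>_def by (simp add: power_divide)
  qed
  have c4: "c * 4 ^ n = 1 / 4"
  proof -
    have "c = inverse (4 powr real (n+1))" unfolding c_def by (rule powr_minus)
    also have "4 powr real (n+1) = (4::real) ^ (n+1)" by (rule powr_realpow) simp
    finally have "c = inverse ((4::real) ^ (n+1))" .
    thus ?thesis by (simp add: field_simps)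
  qed
  have c0: "c > 0" unfolding c_def by simp
  define P where "P = {1..\<lceil>c * N\<rceil> - 1}"
  define U where "U = (\<Union>p\<in>P. boxes p \<delta> :: (real^'n) set)"
  define S where "S = cbox 0 1 - U"
  have finP: "finite P" unfolding P_def by simp
  have Usets: "U \<in> sets lebesgue" unfolding U_def
    using finP by (intro sets.finite_UN boxes_sets) auto
  have Ufm: "U \<in> fmeasurable lebesgue" unfolding U_def
    using finP by (intro fmeasurable.finite_UN boxes_fmeasurable) auto
  have cardP: "real (card P) \<le> c * N"
  proof -
    have "card P = nat (\<lceil>c * N\<rceil> - 1)" unfolding P_def by simp
    moreover have "real_of_int \<lceil>c * N\<rceil> < c * N + 1" by linarith
    moreover have "c * N > 0" using c0 N2 by simp
    ultimately show ?thesis by linarith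
  qed
  have mU: "measure lebesgue U \<le> 1 / 4"
  proof -
    have "measure lebesgue U \<le> (\<Sum>p\<in>P. measure lebesgue (boxes p \<delta> :: (real^'n) set))"
      unfolding U_def using finP by (intro measure_UNION_le boxes_sets) auto
    also have "\<dots> \<le> (\<Sum>p\<in>P. (4 * \<delta>) ^ n)"
      unfolding n_def by (intro sum_mono boxes_measure d0) (auto simp: P_def)
    also have "\<dots> = real (card P) * (4 ^ n * \<delta> ^ n)" by (simp add: power_mult_distrib)
    also have "\<dots> \<le> (c * N) * (4 ^ n * \<delta> ^ n)"
      by (intro mult_right_mono cardP) (use d0 in simp)
    also have "\<dots> = c * 4 ^ n" using dn N2 by simp
    finally show ?thesis using c4 by simp
  qed
  have cb: "cbox 0 (1::real^'n) \<in> fmeasurable lebesgue" by simp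
  have m1: "measure lebesgue (cbox 0 (1::real^'n)) = 1"
  proof -
    have "(0::real^'n) \<in> cbox 0 1" by (simp add: mem_box_cart)
    hence ne: "cbox 0 (1::real^'n) \<noteq> {}" by blast
    have "measure lebesgue (cbox 0 (1::real^'n)) = measure lborel (cbox 0 (1::real^'n))" by simp
    also have "\<dots> = 1" by (simp add: content_cbox_cart[OF ne])
    finally show ?thesis .
  qed
  have "measure lebesgue S = measure lebesgue (cbox 0 (1::real^'n)) - measure lebesgue (cbox 0 1 \<inter> U)"
  proof -
    have e: "S = cbox 0 1 - (cbox 0 1 \<inter> U)" unfolding S_def by blast
    have fin: "emeasure lebesgue (cbox 0 (1::real^'n)) \<noteq> \<infinity>"
      using cb by (simp add: fmeasurable_def)
    show ?thesis unfolding e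
      by (rule measure_Diff[OF fin fmeasurableD[OF cb] sets.Int[OF fmeasurableD[OF cb] Usets]]) blast
  qed
  moreover have "measure lebesgue (cbox 0 1 \<inter> U) \<le> measure lebesgue U"
    using Ufm Usets cb by (intro measure_mono_fmeasurable) auto
  ultimately have mS: "measure lebesgue S \<ge> 3/4" using m1 mU by simp
  have Ssets: "S \<in> sets lebesgue" unfolding S_def by (rule sets.Diff[OF fmeasurableD[OF cb] Usets])
  define K where "K = nat \<lfloor>N\<rfloor> + 1"
  have K1: "real K + 1 > N" "real K \<le> N + 1" unfolding K_def using N2 by linarith+
  have Kd: "(real K + 1) * \<delta> ^ CARD('n) > 1"
  proof -
    have "\<delta> ^ CARD('n) = 1 / N" using dn unfolding n_def .
    hence "(real K + 1) * \<delta> ^ CARD('n) = (real K + 1) / N" by simp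
    moreover have "(real K + 1) / N > 1" using K1 N2 by (simp add: field_simps)
    ultimately show ?thesis by simp
  qed
  show "\<exists>S::(real^'n) set.
           S \<subseteq> cbox 0 1 \<and> S \<in> sets lebesgue \<and> measure lebesgue S \<ge> 3/4 \<and>
           (\<forall>y\<in>S. \<exists>p::int. 4 powr (- real (CARD('n) + 1)) * N \<le> real_of_int p \<and>
                real_of_int p \<le> N + 2 \<and>
                (\<forall>i. dist_int (real_of_int p * y $ i) \<le> 1 / N powr (1 / real CARD('n))))"
  proof (intro exI[of _ S] conjI ballI)
    show "S \<subseteq> cbox 0 1" unfolding S_def by auto
    show "S \<in> sets lebesgue" by (rule Ssets)
    show "measure lebesgue S \<ge> 3/4" by (rule mS)
    fix y assume yS: "y \<in> S"
    obtain p :: int where p: "1 \<le> p" "p \<le> int K" "\<forall>i. dist_int (of_int p * y$i) \<le> \<delta>"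
      using dirichlet[OF d0 less_imp_le[OF d1] Kd] by blast
    have "c * N \<le> real_of_int p"
    proof (rule ccontr)
      assume "\<not> ?thesis"
      hence "real_of_int p < real_of_int \<lceil>c * N\<rceil>" by linarith
      hence "p \<in> P" using p unfolding P_def by simp
      moreover have "y \<in> boxes p \<delta>"
        using cover[OF p(1) d0 d1 _ p(3)] yS unfolding S_def by blast
      ultimately show False using yS unfolding S_def U_def by blast
    qed
    moreover have "real_of_int p \<le> N + 2" using p(2) K1 by linarith
    ultimately show "\<exists>p::int. 4 powr (- real (CARD('n) + 1)) * N \<le> real_of_int p \<and>
                real_of_int p \<le> N + 2 \<and>
                (\<forall>i. dist_int (real_of_int p * y $ i) \<le> 1 / N powr (1 / real CARD('n)))"
      using p(3) unfolding c_def \<delta>_def n_def by blast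
  qed
qed

end
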